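(* For any $n\ge1$, the map $\lambda$ defined on covering pairs $u\lessdot v$ of $(\mathsf{Tr}(n),\preccurlyeq)$ by $\lambda(u,v):=(i,u_i)$, where $i$ is the unique index with $u_i\neq v_i$, is an EL-labelling of $(\mathsf{Tr}(n),\preccurlyeq)$ with values in $\mathbb{Z}^2$ ordered lexicographically. Moreover, there is at most one $\lambda$-weakly decreasing saturated chain between any pair of comparable elements of $\mathsf{Tr}(n)$.
   Context: A triword of size $n$ is a word $u=u_1\cdots u_n$ with $u_i\in\{0,1,2\}$, $u_1\ne 2$, and such that $u_i=0$ implies $u_j\neq 1$ for all $j>i$; $\mathsf{Tr}(n)$ is their set, ordered componentwise: $u\preccurlyeq v$ iff $u_i\le v_i$ for all $i$. Covering pairs in this poset differ in exactly one letter, so $\lambda$ is well defined. A saturated chain is a sequence $x_1\lessdot x_2\lessdot\cdots\lessdot x_r$ of successive coverings; its label sequence is $(\lambda(x_1,x_2),\dots,\lambda(x_{r-1},x_r))$. A saturated chain is $\lambda$-increasing (resp. $\lambda$-weakly decreasing) if its label sequence is strictly increasing (resp. weakly decreasing) in the order of $\mathbb{Z}^2$ (lexicographic); one chain is $\lambda$-smaller than another if its label sequence is smaller in the lexicographic order on sequences induced by that order. For a bounded poset, $\lambda$ is an EL-labelling if for all $x\preccurlyeq y$ there is exactly one $\lambda$-increasing saturated chain from $x$ to $y$, and it is $\lambda$-minimal (lexicographically smallest) among all saturated chains from $x$ to $y$. *)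

theory Defs
  imports Main
begin

text \<open>Words are lists of naturals; position i of the list (0-based) is letter u_(i+1) of the paper.\<close>

definition triword :: "nat \<Rightarrow> nat list \<Rightarrow> bool" where
  "triword n u \<longleftrightarrow> length u = n \<and> set u \<subseteq> {0, 1, 2}
     \<and> (n \<ge> 1 \<longrightarrow> u ! 0 \<noteq> 2)
     \<and> (\<forall>i j. i < j \<and> j < n \<and> u ! i = 0 \<longrightarrow> u ! j \<noteq> 1)"

definition Tr :: "nat \<Rightarrow> nat list set" where
  "Tr n = {u. triword n u}"

definition comp_le :: "nat list \<Rightarrow> nat list \<Rightarrow> bool" where
  "comp_le u v \<longleftrightarrow> length u = length v \<and> (\<forall>i < length u. u ! i \<le> v ! i)"

definition bounded_poset :: "'a set \<Rightarrow> ('a \<Rightarrow> 'a \<Rightarrow> bool) \<Rightarrow> bool" where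
  "bounded_poset P le \<longleftrightarrow>
     (\<forall>x\<in>P. le x x)
   \<and> (\<forall>x\<in>P. \<forall>y\<in>P. le x y \<and> le y x \<longrightarrow> x = y)
   \<and> (\<forall>x\<in>P. \<forall>y\<in>P. \<forall>z\<in>P. le x y \<and> le y z \<longrightarrow> le x z)
   \<and> (\<exists>b\<in>P. \<forall>x\<in>P. le b x) \<and> (\<exists>t\<in>P. \<forall>x\<in>P. le x t)"

definition covers :: "'a set \<Rightarrow> ('a \<Rightarrow> 'a \<Rightarrow> bool) \<Rightarrow> 'a \<Rightarrow> 'a \<Rightarrow> bool" where
  "covers P le x y \<longleftrightarrow> x \<in> P \<and> y \<in> P \<and> le x y \<and> x \<noteq> y
     \<and> \<not> (\<exists>z\<in>P. le x z \<and> le z y \<and> z \<noteq> x \<and> z \<noteq> y)"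

definition sat_chain :: "'a set \<Rightarrow> ('a \<Rightarrow> 'a \<Rightarrow> bool) \<Rightarrow> 'a \<Rightarrow> 'a \<Rightarrow> 'a list \<Rightarrow> bool" where
  "sat_chain P le x y c \<longleftrightarrow> c \<noteq> [] \<and> hd c = x \<and> last c = y
     \<and> (\<forall>i. Suc i < length c \<longrightarrow> covers P le (c ! i) (c ! Suc i))"

definition label_seq :: "('a \<Rightarrow> 'a \<Rightarrow> 'b) \<Rightarrow> 'a list \<Rightarrow> 'b list" where
  "label_seq lab c = map (\<lambda>i. lab (c ! i) (c ! Suc i)) [0..<length c - 1]"

text \<open>EL-labelling w.r.t. a strict order lt on labels; chains are compared by the
  lexicographic order on label sequences induced by lt (a proper prefix is smaller).\<close>
definition is_EL_labelling ::
  "'a set \<Rightarrow> ('a \<Rightarrow> 'a \<Rightarrow> bool) \<Rightarrow> ('b \<Rightarrow> 'b \<Rightarrow> bool) \<Rightarrow> ('a \<Rightarrow> 'a \<Rightarrow> 'b) \<Rightarrow> bool" where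
  "is_EL_labelling P le lt lab \<longleftrightarrow> bounded_poset P le \<and>
    (\<forall>x\<in>P. \<forall>y\<in>P. le x y \<longrightarrow>
       (\<exists>!c. sat_chain P le x y c \<and> sorted_wrt lt (label_seq lab c))
     \<and> (\<forall>c c'. sat_chain P le x y c \<and> sorted_wrt lt (label_seq lab c)
            \<and> sat_chain P le x y c' \<and> c' \<noteq> c
            \<longrightarrow> (label_seq lab c, label_seq lab c') \<in> lexord {(a, b). lt a b}))"

definition lex2_lt :: "int \<times> int \<Rightarrow> int \<times> int \<Rightarrow> bool" where
  "lex2_lt p q \<longleftrightarrow> fst p < fst q \<or> (fst p = fst q \<and> snd p < snd q)"

definition tr_label :: "nat list \<Rightarrow> nat list \<Rightarrow> int \<times> int" where
  "tr_label u v = (let i = (THE i. i < length u \<and> u ! i \<noteq> v ! i) in (int (i + 1), int (u ! i)))"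

definition weakly_decr :: "(int \<times> int) list \<Rightarrow> bool" where
  "weakly_decr s \<longleftrightarrow> sorted_wrt (\<lambda>a b. b = a \<or> lex2_lt b a) s"

end

theory Submission
  imports Defs
begin

lemma sat_chain_single:
  "sat_chain P le x y [a] \<longleftrightarrow> a = x \<and> x = y"
  unfolding sat_chain_def by auto

lemma sat_chain_cons2:
  "sat_chain P le x y (a # b # c) \<longleftrightarrow> a = x \<and> covers P le x b \<and> sat_chain P le b y (b # c)"
proof -
  have "(\<forall>i. Suc i < length (a # b # c) \<longrightarrow> covers P le ((a # b # c) ! i) ((a # b # c) ! Suc i))
     \<longleftrightarrow> covers P le a b \<and> (\<forall>i. Suc i < length (b # c) \<longrightarrow> covers P le ((b # c) ! i) ((b # c) ! Suc i))"
    (is "?L \<longleftrightarrow> ?R")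
  proof
    assume ?L
    then show ?R by (metis Suc_less_eq length_Cons nth_Cons_0 nth_Cons_Suc zero_less_Suc)
  next
    assume ?R
    show ?L
    proof (intro allI impI)
      fix i assume "Suc i < length (a # b # c)"
      then show "covers P le ((a # b # c) ! i) ((a # b # c) ! Suc i)"
        using \<open>?R\<close> by (cases i) auto
    qed
  qed
  then show ?thesis unfolding sat_chain_def by auto
qed

lemma label_seq_single: "label_seq lab [a] = []"
  unfolding label_seq_def by simp

lemma label_seq_cons2: "label_seq lab (a # b # c) = lab a b # label_seq lab (b # c)"
proof -
  have "[0..<length (a # b # c) - 1] = 0 # map Suc [0..<length (b # c) - 1]"
    by (simp add: upt_conv_Cons map_Suc_upt del: upt_Suc)
  then show ?thesis unfolding label_seq_def by simp
qed


lemma comp_le_refl: "comp_le u u" unfolding comp_le_def by auto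

lemma comp_le_trans: "comp_le u v \<Longrightarrow> comp_le v w \<Longrightarrow> comp_le u w"
  unfolding comp_le_def by (metis order_trans)

lemma comp_le_antisym: "comp_le u v \<Longrightarrow> comp_le v u \<Longrightarrow> u = v"
  unfolding comp_le_def by (metis nth_equalityI order_antisym)

lemma Tr_len: "u \<in> Tr n \<Longrightarrow> length u = n"
  unfolding Tr_def triword_def by auto

lemma Tr_le2: "u \<in> Tr n \<Longrightarrow> k < n \<Longrightarrow> u ! k \<le> 2"
proof -
  assume u: "u \<in> Tr n" and k: "k < n"
  then have "u ! k \<in> set u" using Tr_len by auto
  moreover have "set u \<subseteq> {0,1,2}" using u unfolding Tr_def triword_def by auto
  ultimately show ?thesis by auto
qed

lemma leftmost_update_Tr:
  assumes x: "x \<in> Tr n" and y: "y \<in> Tr n" and le: "comp_le x y" and i: "i < n"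
    and pre: "\<forall>k<i. x ! k = y ! k"
  shows "x[i := y ! i] \<in> Tr n"
proof -
  let ?w = "x[i := y ! i]"
  have lx: "length x = n" and ly: "length y = n" using x y Tr_len by auto
  have tx: "triword n x" and ty: "triword n y" using x y unfolding Tr_def by auto
  have len: "length ?w = n" using lx by simp
  have set: "set ?w \<subseteq> {0,1,2}"
  proof -
    have "y ! i \<in> set y" using i ly by auto
    then have "y ! i \<in> {0,1,2}" using ty unfolding triword_def by auto
    moreover have "set x \<subseteq> {0,1,2}" using tx unfolding triword_def by auto
    ultimately show ?thesis using set_update_subset_insert[of x i "y ! i"] by auto
  qed
  have first: "n \<ge> 1 \<longrightarrow> ?w ! 0 \<noteq> 2"
    using tx ty i lx unfolding triword_def by (cases "i = 0") auto
  have zo: "\<forall>a b. a < b \<and> b < n \<and> ?w ! a = 0 \<longrightarrow> ?w ! b \<noteq> 1"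
  proof (intro allI impI)
    fix a b assume ab: "a < b \<and> b < n \<and> ?w ! a = 0"
    show "?w ! b \<noteq> 1"
    proof (cases "a = i")
      case True
      then have "y ! i = 0" using ab lx i by simp
      then have "x ! i = 0" using le i lx unfolding comp_le_def by (metis le_zero_eq)
      then show ?thesis using tx ab True lx unfolding triword_def by auto
    next
      case False
      note aF = False
      show ?thesis
      proof (cases "b = i")
        case True
        then have "x ! a = 0" using ab aF lx by simp
        then have "y ! a = 0" using pre ab True by auto
        then show ?thesis using ty ab True lx unfolding triword_def by auto
      next
        case False
        then show ?thesis using tx ab aF lx unfolding triword_def by auto
      qed
    qed
  qed
  show ?thesis unfolding Tr_def triword_def using len set first zo by auto
qed

lemma cover_char:
  assumes c: "covers (Tr n) comp_le u v"
  shows "\<exists>i<n. u ! i < v ! i \<and> v = u[i := v ! i]"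
proof -
  have u: "u \<in> Tr n" and v: "v \<in> Tr n" and le: "comp_le u v" and ne: "u \<noteq> v"
    and nb: "\<not> (\<exists>z\<in>Tr n. comp_le u z \<and> comp_le z v \<and> z \<noteq> u \<and> z \<noteq> v)"
    using c unfolding covers_def by auto
  have lu: "length u = n" and lv: "length v = n" using u v Tr_len by auto
  have "\<exists>k. k < n \<and> u ! k < v ! k"
  proof (rule ccontr)
    assume "\<not> ?thesis"
    then have "\<forall>k<n. u ! k = v ! k" using le lu unfolding comp_le_def by (meson le_neq_implies_less)
    then show False using ne lu lv by (metis nth_equalityI)
  qed
  then obtain i where i: "i < n \<and> u ! i < v ! i" and imin: "\<forall>k<i. \<not> (k < n \<and> u ! k < v ! k)"
    using exists_least_iff[of "\<lambda>k. k < n \<and> u ! k < v ! k"] by blast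
  have pre: "\<forall>k<i. u ! k = v ! k"
    using imin le lu i unfolding comp_le_def by (meson le_neq_implies_less less_trans)
  let ?w = "u[i := v ! i]"
  have w: "?w \<in> Tr n" using leftmost_update_Tr[OF u v le] i pre by auto
  have "comp_le u ?w" using le lu i unfolding comp_le_def by (simp add: nth_list_update)
  moreover have "comp_le ?w v" using le lu lv i unfolding comp_le_def by (simp add: nth_list_update)
  moreover have "?w \<noteq> u" using i lu by (metis less_not_refl nth_list_update_eq)
  ultimately have "?w = v" using nb w by blast
  then show ?thesis using i by auto
qed

lemma tr_label_update:
  assumes "i < length u" "a \<noteq> u ! i"
  shows "tr_label u (u[i := a]) = (int (i + 1), int (u ! i))"
proof -
  have "(THE k. k < length u \<and> u ! k \<noteq> u[i := a] ! k) = i"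
    by (rule the_equality) (use assms in \<open>auto simp: nth_list_update split: if_splits\<close>)
  then show ?thesis unfolding tr_label_def Let_def by simp
qed

lemma cover_label:
  assumes c: "covers (Tr n) comp_le u v"
  obtains i where "i < n" "u ! i < v ! i" "v = u[i := v ! i]"
    "tr_label u v = (int (i + 1), int (u ! i))"
proof -
  obtain i where i: "i < n" "u ! i < v ! i" "v = u[i := v ! i]" using cover_char[OF c] by blast
  have "length u = n" using c Tr_len unfolding covers_def by auto
  then have "tr_label u v = (int (i + 1), int (u ! i))"
    using i tr_label_update[of i u "v ! i"] by (metis less_irrefl)
  then show ?thesis using that i by blast
qed

lemma cover_unique:
  assumes c1: "covers (Tr n) comp_le u v" and c2: "covers (Tr n) comp_le u w"
    and lab: "tr_label u v = tr_label u w"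
  shows "v = w"
proof -
  obtain i where i: "i < n" "u ! i < v ! i" "v = u[i := v ! i]"
    "tr_label u v = (int (i + 1), int (u ! i))" using cover_label[OF c1] by blast
  obtain j where j: "j < n" "u ! j < w ! j" "w = u[j := w ! j]"
    "tr_label u w = (int (j + 1), int (u ! j))" using cover_label[OF c2] by blast
  have ij: "i = j" using i(4) j(4) lab by simp
  have lu: "length u = n" using c1 Tr_len unfolding covers_def by auto
  have gen: "p = q" if cp: "covers (Tr n) comp_le u p" and cq: "covers (Tr n) comp_le u q"
      and pp: "p = u[i := a]" and qq: "q = u[i := b]" and ua: "u ! i < a" and ab: "a \<le> b" for p q a b
  proof (rule ccontr)
    assume "p \<noteq> q"
    have "comp_le p q" using pp qq ab lu i(1) unfolding comp_le_def by (simp add: nth_list_update)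
    moreover have "p \<noteq> u" using pp ua lu i(1) by (metis less_not_refl nth_list_update_eq)
    moreover have "p \<in> Tr n" "comp_le u p" using cp unfolding covers_def by auto
    ultimately show False using cq \<open>p \<noteq> q\<close> unfolding covers_def by blast
  qed
  have w': "w = u[i := w ! i]" using j(3) ij by simp
  show ?thesis
  proof (cases "v ! i \<le> w ! i")
    case True
    show ?thesis using gen[OF c1 c2 i(3) w' i(2) True] .
  next
    case False
    have "u ! i < w ! i" using j(2) ij by simp
    then show ?thesis using gen[OF c2 c1 w' i(3)] False by simp
  qed
qed

lemma single_cover:
  assumes x: "x \<in> Tr n" and z: "z \<in> Tr n" and zz: "z = x[i := a]" and i: "i < n"
    and xa: "x ! i < a" and gap: "\<forall>b. x ! i < b \<and> b < a \<longrightarrow> x[i := b] \<notin> Tr n"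
  shows "covers (Tr n) comp_le x z"
proof -
  have lx: "length x = n" using x Tr_len by auto
  have le: "comp_le x z" using zz lx xa i unfolding comp_le_def by (simp add: nth_list_update)
  have ne: "x \<noteq> z" using zz xa lx i by (metis less_not_refl nth_list_update_eq)
  have "\<not> (\<exists>w\<in>Tr n. comp_le x w \<and> comp_le w z \<and> w \<noteq> x \<and> w \<noteq> z)"
  proof
    assume "\<exists>w\<in>Tr n. comp_le x w \<and> comp_le w z \<and> w \<noteq> x \<and> w \<noteq> z"
    then obtain w where w: "w \<in> Tr n" "comp_le x w" "comp_le w z" "w \<noteq> x" "w \<noteq> z" by blast
    have lw: "length w = n" using w Tr_len by auto
    have eqk: "\<forall>k<n. k \<noteq> i \<longrightarrow> w ! k = x ! k"
      using w(2,3) zz lx unfolding comp_le_def by (metis le_antisym nth_list_update_neq)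
    have ww: "w = x[i := w ! i]"
      by (rule nth_equalityI) (use lw lx eqk i in \<open>auto simp: nth_list_update\<close>)
    have b1: "x ! i \<le> w ! i" "w ! i \<le> a"
      using w(2,3) zz lx i unfolding comp_le_def by auto
    show False
    proof (cases "w ! i = x ! i")
      case True then show False using ww w(4) by simp
    next
      case False
      show False
      proof (cases "w ! i = a")
        case True then show False using ww w(5) zz by simp
      next
        case False
        then have "x ! i < w ! i" "w ! i < a" using b1 \<open>w ! i \<noteq> x ! i\<close> by auto
        then have "x[i := w ! i] \<notin> Tr n" using gap by blast
        then show False using ww w(1) by simp
      qed
    qed
  qed
  then show ?thesis unfolding covers_def using x z le ne by auto
qed


section \<open>Chains in Tr n\<close>

lemma sat_chain_hd: "sat_chain P le x y c \<Longrightarrow> \<exists>cs. c = x # cs"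
  unfolding sat_chain_def by (cases c) auto

lemma chain_le:
  assumes "x \<in> Tr n" "sat_chain (Tr n) comp_le x y (x # cs)"
  shows "comp_le x y"
  using assms
proof (induction cs arbitrary: x)
  case Nil
  then show ?case by (simp add: sat_chain_single comp_le_refl)
next
  case (Cons b cs)
  then have c: "covers (Tr n) comp_le x b" and s: "sat_chain (Tr n) comp_le b y (b # cs)"
    by (auto simp: sat_chain_cons2)
  then have "b \<in> Tr n" "comp_le x b" unfolding covers_def by auto
  then show ?case using Cons.IH s comp_le_trans by blast
qed

lemma chain_labels:
  assumes "x \<in> Tr n" "sat_chain (Tr n) comp_le x y (x # cs)"
    "l \<in> set (label_seq tr_label (x # cs))"
  shows "\<exists>w j. comp_le x w \<and> j < n \<and> w ! j < y ! j \<and> l = (int (j + 1), int (w ! j))"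
  using assms
proof (induction cs arbitrary: x)
  case Nil
  then show ?case by (simp add: label_seq_single)
next
  case (Cons b cs)
  then have c: "covers (Tr n) comp_le x b" and s: "sat_chain (Tr n) comp_le b y (b # cs)"
    by (auto simp: sat_chain_cons2)
  then have b: "b \<in> Tr n" "comp_le x b" unfolding covers_def by auto
  have l: "l = tr_label x b \<or> l \<in> set (label_seq tr_label (b # cs))"
    using Cons.prems(3) by (simp add: label_seq_cons2)
  then show ?case
  proof
    assume l1: "l = tr_label x b"
    obtain i where i: "i < n" "x ! i < b ! i" "b = x[i := b ! i]"
      "tr_label x b = (int (i + 1), int (x ! i))" using cover_label[OF c] by blast
    have "comp_le b y" using chain_le[OF b(1) s] .
    moreover have "length b = n" using b Tr_len by auto
    ultimately have "b ! i \<le> y ! i" using i(1) unfolding comp_le_def by auto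
    then have "x ! i < y ! i" using i(2) by simp
    then show ?case using l1 i(1,4) comp_le_refl by blast
  next
    assume "l \<in> set (label_seq tr_label (b # cs))"
    then obtain w j where "comp_le b w" "j < n" "w ! j < y ! j" "l = (int (j + 1), int (w ! j))"
      using Cons.IH[OF b(1) s] by blast
    then show ?case using comp_le_trans[OF b(2)] by blast
  qed
qed

lemma chain_hits:
  assumes "x \<in> Tr n" "sat_chain (Tr n) comp_le x y (x # cs)" "j < n" "x ! j < y ! j"
  shows "\<exists>l\<in>set (label_seq tr_label (x # cs)). fst l = int (j + 1)"
  using assms
proof (induction cs arbitrary: x)
  case Nil
  then show ?case by (simp add: sat_chain_single)
next
  case (Cons b cs)
  then have c: "covers (Tr n) comp_le x b" and s: "sat_chain (Tr n) comp_le b y (b # cs)"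
    by (auto simp: sat_chain_cons2)
  then have b: "b \<in> Tr n" unfolding covers_def by auto
  obtain i where i: "i < n" "x ! i < b ! i" "b = x[i := b ! i]"
    "tr_label x b = (int (i + 1), int (x ! i))" using cover_label[OF c] by blast
  show ?case
  proof (cases "i = j")
    case True
    then show ?thesis using i(4) by (simp add: label_seq_cons2)
  next
    case False
    then have "b ! j = x ! j" using i(3) by (metis nth_list_update_neq)
    then have "\<exists>l\<in>set (label_seq tr_label (b # cs)). fst l = int (j + 1)"
      using Cons.IH[OF b s Cons.prems(3)] Cons.prems(4) by simp
    then show ?thesis by (auto simp: label_seq_cons2)
  qed
qed


lemma inc_exists:
  assumes "x \<in> Tr n" "y \<in> Tr n" "comp_le x y"
  shows "\<exists>cs. sat_chain (Tr n) comp_le x y (x # cs) \<and> sorted_wrt lex2_lt (label_seq tr_label (x # cs))"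
  using assms
proof (induction "\<Sum>k<n. y ! k - x ! k" arbitrary: x rule: less_induct)
  case less
  note x = less.prems(1) and y = less.prems(2) and le = less.prems(3)
  have lx: "length x = n" and ly: "length y = n" using x y Tr_len by auto
  show ?case
  proof (cases "x = y")
    case True
    then show ?thesis by (intro exI[of _ "[]"]) (simp add: sat_chain_single label_seq_single)
  next
    case False
    have "\<exists>k. k < n \<and> x ! k < y ! k"
    proof (rule ccontr)
      assume "\<not> ?thesis"
      then have "\<forall>k<n. x ! k = y ! k" using le lx unfolding comp_le_def by (meson le_neq_implies_less)
      then show False using False lx ly by (metis nth_equalityI)
    qed
    then obtain i where i: "i < n" "x ! i < y ! i" and imin: "\<forall>k<i. \<not> (k < n \<and> x ! k < y ! k)"
      using exists_least_iff[of "\<lambda>k. k < n \<and> x ! k < y ! k"] by blast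
    have pre: "\<forall>k<i. x ! k = y ! k"
      using imin le lx i unfolding comp_le_def by (meson le_neq_implies_less less_trans)
    have yi2: "y ! i \<le> 2" using Tr_le2[OF y i(1)] .
    obtain a where a: "x ! i < a" "a \<le> y ! i" "x[i := a] \<in> Tr n"
      "\<forall>b. x ! i < b \<and> b < a \<longrightarrow> x[i := b] \<notin> Tr n"
    proof (cases "x[i := Suc (x ! i)] \<in> Tr n")
      case True
      have g: "\<forall>b. x ! i < b \<and> b < Suc (x ! i) \<longrightarrow> x[i := b] \<notin> Tr n" by auto
      have "Suc (x ! i) \<le> y ! i" using i(2) by simp
      then show ?thesis using that[OF _ _ True g] by simp
    next
      case False
      have "\<forall>b. x ! i < b \<and> b < y ! i \<longrightarrow> b = Suc (x ! i)" using yi2 by auto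
      then show ?thesis using that[of "y ! i"] i(2) False leftmost_update_Tr[OF x y le i(1) pre]
        by auto
    qed
    let ?z = "x[i := a]"
    have cov: "covers (Tr n) comp_le x ?z" using single_cover[OF x a(3) refl i(1) a(1) a(4)] .
    have zy: "comp_le ?z y" using le lx ly a(2) i(1) unfolding comp_le_def by (auto simp: nth_list_update)
    have meas: "(\<Sum>k<n. y ! k - ?z ! k) < (\<Sum>k<n. y ! k - x ! k)"
    proof (rule sum_strict_mono_ex1)
      show "finite {..<n}" by simp
      show "\<forall>k\<in>{..<n}. y ! k - ?z ! k \<le> y ! k - x ! k"
        using lx a(1) i(1) by (auto simp: nth_list_update)
      show "\<exists>k\<in>{..<n}. y ! k - ?z ! k < y ! k - x ! k"
        using lx a(1,2) i by (intro bexI[of _ i]) auto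
    qed
    obtain cs where cs: "sat_chain (Tr n) comp_le ?z y (?z # cs)"
      "sorted_wrt lex2_lt (label_seq tr_label (?z # cs))"
      using less.hyps[OF meas a(3) y zy] by blast
    have lab: "tr_label x ?z = (int (i + 1), int (x ! i))"
      using tr_label_update[of i x a] lx i a(1) by simp
    have "\<forall>l\<in>set (label_seq tr_label (?z # cs)). lex2_lt (tr_label x ?z) l"
    proof
      fix l assume "l \<in> set (label_seq tr_label (?z # cs))"
      then obtain w j where w: "comp_le ?z w" "j < n" "w ! j < y ! j" "l = (int (j + 1), int (w ! j))"
        using chain_labels[OF a(3) cs(1)] by blast
      have zj: "?z ! j \<le> w ! j" using w(1,2) lx unfolding comp_le_def by auto
      have "i \<le> j"
      proof (rule ccontr)
        assume "\<not> i \<le> j"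
        then have "?z ! j = y ! j" using pre lx by (simp add: nth_list_update)
        then show False using zj w(3) by simp
      qed
      moreover have "i = j \<Longrightarrow> x ! i < w ! j" using zj a(1) lx i by simp
      ultimately show "lex2_lt (tr_label x ?z) l" using lab w(4) unfolding lex2_lt_def by auto
    qed
    then have "sorted_wrt lex2_lt (label_seq tr_label (x # ?z # cs))"
      using cs(2) by (simp add: label_seq_cons2)
    moreover have "sat_chain (Tr n) comp_le x y (x # ?z # cs)"
      using cov cs(1) by (simp add: sat_chain_cons2)
    ultimately show ?thesis by blast
  qed
qed


lemma no_back:
  assumes "covers (Tr n) comp_le x b" "sat_chain (Tr n) comp_le b x (b # cs)"
  shows False
proof -
  have "b \<in> Tr n" "comp_le x b" "x \<noteq> b" using assms(1) unfolding covers_def by auto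
  moreover have "comp_le b x" using chain_le[OF \<open>b \<in> Tr n\<close> assms(2)] .
  ultimately show False using comp_le_antisym by blast
qed

lemma step_pos_diff:
  assumes c: "covers (Tr n) comp_le x b" and s: "sat_chain (Tr n) comp_le b y (b # cs)"
    and i: "i < n" "x ! i < b ! i"
  shows "x ! i < y ! i"
proof -
  have b: "b \<in> Tr n" using c unfolding covers_def by auto
  have "comp_le b y" using chain_le[OF b s] .
  moreover have "length b = n" using b Tr_len by auto
  ultimately have "b ! i \<le> y ! i" using i unfolding comp_le_def by auto
  then show ?thesis using i by simp
qed

lemma inc_first:
  assumes c: "covers (Tr n) comp_le x b" and s: "sat_chain (Tr n) comp_le b y (b # cs)"
    and srt: "sorted_wrt lex2_lt (tr_label x b # label_seq tr_label (b # cs))"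
    and j: "j < n" "b = x[j := b ! j]" "tr_label x b = (int (j + 1), int (x ! j))"
    and k: "k < n" "x ! k < y ! k"
  shows "j \<le> k"
proof (rule ccontr)
  assume "\<not> j \<le> k"
  then have "b ! k = x ! k" using j(2) by (metis less_not_refl2 not_le nth_list_update_neq)
  have b: "b \<in> Tr n" using c unfolding covers_def by auto
  obtain l where l: "l \<in> set (label_seq tr_label (b # cs))" "fst l = int (k + 1)"
    using chain_hits[OF b s k(1)] k(2) \<open>b ! k = x ! k\<close> by auto
  have "lex2_lt (tr_label x b) l" using srt l(1) by simp
  then show False using l(2) j(3) \<open>\<not> j \<le> k\<close> unfolding lex2_lt_def by auto
qed

lemma inc_min:
  assumes "x \<in> Tr n" "sat_chain (Tr n) comp_le x y (x # cs)"
    "sorted_wrt lex2_lt (label_seq tr_label (x # cs))"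
    "sat_chain (Tr n) comp_le x y (x # cs')" "cs \<noteq> cs'"
  shows "(label_seq tr_label (x # cs), label_seq tr_label (x # cs')) \<in> lexord {(a, b). lex2_lt a b}"
  using assms
proof (induction cs arbitrary: x cs')
  case Nil
  then obtain b' cs'' where "cs' = b' # cs''" by (cases cs') auto
  then show ?case by (simp add: label_seq_single label_seq_cons2)
next
  case (Cons b cs)
  then have c: "covers (Tr n) comp_le x b" and s: "sat_chain (Tr n) comp_le b y (b # cs)"
    by (auto simp: sat_chain_cons2)
  have bT: "b \<in> Tr n" using c unfolding covers_def by auto
  show ?case
  proof (cases cs')
    case Nil
    then have "x = y" using Cons.prems(4) by (simp add: sat_chain_single)
    then show ?thesis using no_back c s by blast
  next
    case (Cons b' cs'')
    then have c': "covers (Tr n) comp_le x b'" and s': "sat_chain (Tr n) comp_le b' y (b' # cs'')"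
      using Cons.prems(4) by (auto simp: sat_chain_cons2)
    obtain j where j: "j < n" "x ! j < b ! j" "b = x[j := b ! j]"
      "tr_label x b = (int (j + 1), int (x ! j))" using cover_label[OF c] by blast
    obtain j' where j': "j' < n" "x ! j' < b' ! j'" "b' = x[j' := b' ! j']"
      "tr_label x b' = (int (j' + 1), int (x ! j'))" using cover_label[OF c'] by blast
    have srt: "sorted_wrt lex2_lt (tr_label x b # label_seq tr_label (b # cs))"
      using Cons.prems(3) by (simp add: label_seq_cons2)
    have "x ! j' < y ! j'" using step_pos_diff[OF c' s' j'(1,2)] .
    then have jj: "j \<le> j'" using inc_first[OF c s srt j(1,3,4) j'(1)] by blast
    show ?thesis
    proof (cases "j = j'")
      case False
      then have "lex2_lt (tr_label x b) (tr_label x b')" using jj j(4) j'(4) unfolding lex2_lt_def by auto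
      then show ?thesis using Cons by (simp add: label_seq_cons2)
    next
      case True
      then have lab: "tr_label x b = tr_label x b'" using j(4) j'(4) by simp
      then have bb: "b = b'" using cover_unique[OF c c'] by blast
      then have "cs \<noteq> cs''" using Cons.prems(5) \<open>cs' = b' # cs''\<close> by simp
      have srt2: "sorted_wrt lex2_lt (label_seq tr_label (b # cs))" using srt by simp
      have "(label_seq tr_label (b # cs), label_seq tr_label (b # cs'')) \<in> lexord {(a, b). lex2_lt a b}"
        using Cons.IH[OF bT s srt2 _ \<open>cs \<noteq> cs''\<close>] s' bb by simp
      then show ?thesis using lab bb \<open>cs' = b' # cs''\<close> by (simp add: label_seq_cons2)
    qed
  qed
qed

lemma wd_first:
  assumes c: "covers (Tr n) comp_le x b" and s: "sat_chain (Tr n) comp_le b y (b # cs)"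
    and wd: "weakly_decr (tr_label x b # label_seq tr_label (b # cs))"
    and j: "j < n" "b = x[j := b ! j]" "tr_label x b = (int (j + 1), int (x ! j))"
    and k: "k < n" "x ! k < y ! k"
  shows "k \<le> j"
proof (rule ccontr)
  assume "\<not> k \<le> j"
  then have "b ! k = x ! k" using j(2) by (metis less_not_refl2 not_le nth_list_update_neq)
  have b: "b \<in> Tr n" using c unfolding covers_def by auto
  obtain l where l: "l \<in> set (label_seq tr_label (b # cs))" "fst l = int (k + 1)"
    using chain_hits[OF b s k(1)] k(2) \<open>b ! k = x ! k\<close> by auto
  have "l = tr_label x b \<or> lex2_lt l (tr_label x b)" using wd l(1) unfolding weakly_decr_def by simp
  then show False using l(2) j(3) \<open>\<not> k \<le> j\<close> unfolding lex2_lt_def by auto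
qed

lemma wd_unique:
  assumes "x \<in> Tr n" "sat_chain (Tr n) comp_le x y (x # cs)"
    "weakly_decr (label_seq tr_label (x # cs))"
    "sat_chain (Tr n) comp_le x y (x # cs')" "weakly_decr (label_seq tr_label (x # cs'))"
  shows "cs = cs'"
  using assms
proof (induction cs arbitrary: x cs')
  case Nil
  then have "x = y" by (simp add: sat_chain_single)
  show ?case
  proof (cases cs')
    case (Cons b' cs'')
    then have "covers (Tr n) comp_le x b'" "sat_chain (Tr n) comp_le b' y (b' # cs'')"
      using Nil.prems(4) by (auto simp: sat_chain_cons2)
    then show ?thesis using no_back \<open>x = y\<close> by blast
  qed simp
next
  case (Cons b cs)
  then have c: "covers (Tr n) comp_le x b" and s: "sat_chain (Tr n) comp_le b y (b # cs)"
    by (auto simp: sat_chain_cons2)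
  have bT: "b \<in> Tr n" using c unfolding covers_def by auto
  show ?case
  proof (cases cs')
    case Nil
    then have "x = y" using Cons.prems(4) by (simp add: sat_chain_single)
    then show ?thesis using no_back c s by blast
  next
    case (Cons b' cs'')
    then have c': "covers (Tr n) comp_le x b'" and s': "sat_chain (Tr n) comp_le b' y (b' # cs'')"
      using Cons.prems(4) by (auto simp: sat_chain_cons2)
    obtain j where j: "j < n" "x ! j < b ! j" "b = x[j := b ! j]"
      "tr_label x b = (int (j + 1), int (x ! j))" using cover_label[OF c] by blast
    obtain j' where j': "j' < n" "x ! j' < b' ! j'" "b' = x[j' := b' ! j']"
      "tr_label x b' = (int (j' + 1), int (x ! j'))" using cover_label[OF c'] by blast
    have wd1: "weakly_decr (tr_label x b # label_seq tr_label (b # cs))"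
      using Cons.prems(3) by (simp add: label_seq_cons2)
    have wd2: "weakly_decr (tr_label x b' # label_seq tr_label (b' # cs''))"
      using Cons.prems(5) \<open>cs' = b' # cs''\<close> by (simp add: label_seq_cons2)
    have "x ! j' < y ! j'" using step_pos_diff[OF c' s' j'(1,2)] .
    then have "j' \<le> j" using wd_first[OF c s wd1 j(1,3,4) j'(1)] by blast
    moreover have "x ! j < y ! j" using step_pos_diff[OF c s j(1,2)] .
    then have "j \<le> j'" using wd_first[OF c' s' wd2 j'(1,3,4) j(1)] by blast
    ultimately have "j = j'" by simp
    then have lab: "tr_label x b = tr_label x b'" using j(4) j'(4) by simp
    then have bb: "b = b'" using cover_unique[OF c c'] by blast
    have "weakly_decr (label_seq tr_label (b # cs))" using wd1 unfolding weakly_decr_def by simp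
    moreover have "weakly_decr (label_seq tr_label (b # cs''))" using wd2 bb unfolding weakly_decr_def by simp
    ultimately have "cs = cs''" using Cons.IH[OF bT s] s' bb by simp
    then show ?thesis using bb \<open>cs' = b' # cs''\<close> by simp
  qed
qed


lemma bounded_Tr:
  assumes "n \<ge> 1"
  shows "bounded_poset (Tr n) comp_le"
proof -
  have bot: "replicate n 0 \<in> Tr n"
    unfolding Tr_def triword_def using assms by auto
  let ?t = "(1::nat) # replicate (n - 1) 2"
  have lt: "length ?t = n" using assms by simp
  have top: "?t \<in> Tr n"
    unfolding Tr_def triword_def using assms
    by (auto simp: nth_Cons' split: if_splits)
  have botle: "\<forall>x\<in>Tr n. comp_le (replicate n 0) x"
    unfolding comp_le_def using Tr_len by auto
  have tople: "\<forall>x\<in>Tr n. comp_le x ?t"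
  proof
    fix x assume x: "x \<in> Tr n"
    have lx: "length x = n" using x Tr_len by auto
    have "\<forall>i<n. x ! i \<le> ?t ! i"
    proof (intro allI impI)
      fix i assume i: "i < n"
      show "x ! i \<le> ?t ! i"
      proof (cases i)
        case 0
        have "x ! 0 \<noteq> 2" using x assms unfolding Tr_def triword_def by auto
        then show ?thesis using Tr_le2[OF x i] 0 by simp
      next
        case (Suc k)
        then show ?thesis using Tr_le2[OF x i] i by simp
      qed
    qed
    then show "comp_le x ?t" unfolding comp_le_def using lx lt by simp
  qed
  show ?thesis unfolding bounded_poset_def
    using comp_le_refl comp_le_antisym comp_le_trans bot top botle tople by blast
qed

lemma asym_lex2: "asym {(a, b). lex2_lt a b}"
  by (rule asymI) (auto simp: lex2_lt_def)

theorem theorem2p1: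
  fixes n :: nat
  assumes "n \<ge> 1"
  shows "is_EL_labelling (Tr n) comp_le lex2_lt tr_label
       \<and> (\<forall>x\<in>Tr n. \<forall>y\<in>Tr n. comp_le x y \<longrightarrow>
            (\<forall>c c'. sat_chain (Tr n) comp_le x y c \<and> weakly_decr (label_seq tr_label c)
                 \<and> sat_chain (Tr n) comp_le x y c' \<and> weakly_decr (label_seq tr_label c')
                 \<longrightarrow> c = c'))"
proof (intro conjI ballI impI allI)
  show "is_EL_labelling (Tr n) comp_le lex2_lt tr_label"
    unfolding is_EL_labelling_def
  proof (intro conjI ballI impI allI)
    show "bounded_poset (Tr n) comp_le" using bounded_Tr[OF assms] .
  next
    fix x y assume x: "x \<in> Tr n" and y: "y \<in> Tr n" and le: "comp_le x y"
    obtain cs where cs: "sat_chain (Tr n) comp_le x y (x # cs)"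
      "sorted_wrt lex2_lt (label_seq tr_label (x # cs))" using inc_exists[OF x y le] by blast
    show "\<exists>!c. sat_chain (Tr n) comp_le x y c \<and> sorted_wrt lex2_lt (label_seq tr_label c)"
    proof (rule ex1I[of _ "x # cs"])
      show "sat_chain (Tr n) comp_le x y (x # cs) \<and> sorted_wrt lex2_lt (label_seq tr_label (x # cs))"
        using cs by blast
    next
      fix c assume c: "sat_chain (Tr n) comp_le x y c \<and> sorted_wrt lex2_lt (label_seq tr_label c)"
      have "sat_chain (Tr n) comp_le x y c" using c by (rule conjunct1)
      then obtain cs' where cs': "c = x # cs'" using sat_chain_hd by metis
      show "c = x # cs"
      proof (rule ccontr)
        assume "c \<noteq> x # cs"
        then have ne: "cs \<noteq> cs'" using cs' by simp
        have c1: "sat_chain (Tr n) comp_le x y (x # cs')" and c2: "sorted_wrt lex2_lt (label_seq tr_label (x # cs'))"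
          using c cs' by auto
        have "(label_seq tr_label (x # cs), label_seq tr_label (x # cs')) \<in> lexord {(a, b). lex2_lt a b}"
          using inc_min[OF x cs(1) cs(2) c1 ne] .
        moreover have "(label_seq tr_label (x # cs'), label_seq tr_label (x # cs)) \<in> lexord {(a, b). lex2_lt a b}"
          using inc_min[OF x c1 c2 cs(1)] ne by blast
        ultimately show False using lexord_asymmetric[OF asym_lex2] by blast
      qed
    qed
  next
    fix x y c c' assume x: "x \<in> Tr n" and y: "y \<in> Tr n" and le: "comp_le x y"
      and h: "sat_chain (Tr n) comp_le x y c \<and> sorted_wrt lex2_lt (label_seq tr_label c)
            \<and> sat_chain (Tr n) comp_le x y c' \<and> c' \<noteq> c"
    have "sat_chain (Tr n) comp_le x y c" "sat_chain (Tr n) comp_le x y c'" using h by auto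
    then obtain cs cs' where cs: "c = x # cs" and cs': "c' = x # cs'" using sat_chain_hd by metis
    have h1: "sat_chain (Tr n) comp_le x y (x # cs)" "sorted_wrt lex2_lt (label_seq tr_label (x # cs))"
      "sat_chain (Tr n) comp_le x y (x # cs')" "cs \<noteq> cs'" using h cs cs' by auto
    show "(label_seq tr_label c, label_seq tr_label c') \<in> lexord {(a, b). lex2_lt a b}"
      using inc_min[OF x h1] cs cs' by simp
  qed
next
  fix x y c c' assume x: "x \<in> Tr n" and y: "y \<in> Tr n" and le: "comp_le x y"
    and h: "sat_chain (Tr n) comp_le x y c \<and> weakly_decr (label_seq tr_label c)
            \<and> sat_chain (Tr n) comp_le x y c' \<and> weakly_decr (label_seq tr_label c')"
  have "sat_chain (Tr n) comp_le x y c" "sat_chain (Tr n) comp_le x y c'" using h by auto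
  then obtain cs cs' where cs: "c = x # cs" and cs': "c' = x # cs'" using sat_chain_hd by metis
  have h1: "sat_chain (Tr n) comp_le x y (x # cs)" "weakly_decr (label_seq tr_label (x # cs))"
    "sat_chain (Tr n) comp_le x y (x # cs')" "weakly_decr (label_seq tr_label (x # cs'))"
    using h cs cs' by auto
  show "c = c'" using wd_unique[OF x h1] cs cs' by simp
qed

end
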